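(* Let $\mathfrak F=(X,\parallel,Y,S_\vee)$ be a frame satisfying (F0)–(F4). For $B\in\mathcal G(Y)$ define $\overline\zeta_S(B)=\{x\in X:\overline\eta_S(\Gamma x)\subseteq B\}$. Then $\overline\zeta_S(B)\in\mathcal G(X)$ and $\overline\zeta_S$ is the right residual of $\overline\eta_S:\mathcal G(X)\to\mathcal G(Y)$: for all $A\in\mathcal G(X)$ and $B\in\mathcal G(Y)$, $\overline\eta_S(A)\subseteq B$ iff $A\subseteq\overline\zeta_S(B)$.
   Context: Polarity $(X,\parallel,Y)$, ${\parallel}\subseteq X\times Y$, $I$ its complement. $U'=\{y:\forall x\in U\;x\parallel y\}$ for $U\subseteq X$, $V'=\{x:\forall y\in V\;x\parallel y\}$ for $V\subseteq Y$; stable sets $A=A''\subseteq X$ form $\mathcal G(X)$, co-stable sets $B=B''\subseteq Y$ form $\mathcal G(Y)$ (joins $(\bigcup A_j)''$). $x\preceq z$ iff $\{x\}'\subseteq\{z\}'$, similarly on $Y$; separated means these are partial orders; $\Gamma u$ is the up-set of $u$; closed elements are the sets $\Gamma u$. Frame $(X,\parallel,Y,S_\vee)$, $S_\vee\subseteq Y\times X$, $S_\vee x=\{y:yS_\vee x\}$, $yS_\vee=\{x:yS_\vee x\}$, $zS'_\vee x$ iff $\forall y(yS_\vee x\Rightarrow z\parallel y)$. Axioms (F0) $\forall x\exists y\,xIy$, $\forall y\exists x\,xIy$; (F1) separated; (F2) each $S_\vee x$ a closed element of $\mathcal G(Y)$; (F3) each $yS_\vee$ a down-set; (F4) for each $x$,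 $\{z:zS'_\vee x\}\in\mathcal G(X)$, for each $z$, $\{x:zS'_\vee x\}\in\mathcal G(X)$. $\overline\eta_S(A)=(\bigcup_{x\in A}S_\vee x)''$ for $A\in\mathcal G(X)$. *)

theory Defs
  imports Main
begin

text \<open>Polarity (X, R, Y) with R the relation written as parallel; frame relation S
  (the relation S_vee) between Y and X.  All notions are relativised to the carriers X and Y.\<close>

definition lpr :: "'a set \<Rightarrow> ('a \<Rightarrow> 'b \<Rightarrow> bool) \<Rightarrow> 'b set \<Rightarrow> 'a set \<Rightarrow> 'b set" where
  "lpr X R Y U = {y \<in> Y. \<forall>x\<in>U. R x y}"

definition rpr :: "'a set \<Rightarrow> ('a \<Rightarrow> 'b \<Rightarrow> bool) \<Rightarrow> 'b set \<Rightarrow> 'b set \<Rightarrow> 'a set" where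
  "rpr X R Y V = {x \<in> X. \<forall>y\<in>V. R x y}"

definition stable :: "'a set \<Rightarrow> ('a \<Rightarrow> 'b \<Rightarrow> bool) \<Rightarrow> 'b set \<Rightarrow> 'a set \<Rightarrow> bool" where
  "stable X R Y A \<longleftrightarrow> A \<subseteq> X \<and> rpr X R Y (lpr X R Y A) = A"

definition costable :: "'a set \<Rightarrow> ('a \<Rightarrow> 'b \<Rightarrow> bool) \<Rightarrow> 'b set \<Rightarrow> 'b set \<Rightarrow> bool" where
  "costable X R Y B \<longleftrightarrow> B \<subseteq> Y \<and> lpr X R Y (rpr X R Y B) = B"

definition leX :: "'a set \<Rightarrow> ('a \<Rightarrow> 'b \<Rightarrow> bool) \<Rightarrow> 'b set \<Rightarrow> 'a \<Rightarrow> 'a \<Rightarrow> bool" where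
  "leX X R Y x z \<longleftrightarrow> lpr X R Y {x} \<subseteq> lpr X R Y {z}"

definition leY :: "'a set \<Rightarrow> ('a \<Rightarrow> 'b \<Rightarrow> bool) \<Rightarrow> 'b set \<Rightarrow> 'b \<Rightarrow> 'b \<Rightarrow> bool" where
  "leY X R Y y w \<longleftrightarrow> rpr X R Y {y} \<subseteq> rpr X R Y {w}"

definition GammaX :: "'a set \<Rightarrow> ('a \<Rightarrow> 'b \<Rightarrow> bool) \<Rightarrow> 'b set \<Rightarrow> 'a \<Rightarrow> 'a set" where
  "GammaX X R Y x = {z \<in> X. leX X R Y x z}"

definition GammaY :: "'a set \<Rightarrow> ('a \<Rightarrow> 'b \<Rightarrow> bool) \<Rightarrow> 'b set \<Rightarrow> 'b \<Rightarrow> 'b set" where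
  "GammaY X R Y y = {w \<in> Y. leY X R Y y w}"

definition separated :: "'a set \<Rightarrow> ('a \<Rightarrow> 'b \<Rightarrow> bool) \<Rightarrow> 'b set \<Rightarrow> bool" where
  "separated X R Y \<longleftrightarrow>
     (\<forall>x\<in>X. \<forall>z\<in>X. leX X R Y x z \<and> leX X R Y z x \<longrightarrow> x = z) \<and>
     (\<forall>y\<in>Y. \<forall>w\<in>Y. leY X R Y y w \<and> leY X R Y w y \<longrightarrow> y = w)"

definition Sset :: "'a set \<Rightarrow> 'b set \<Rightarrow> ('b \<Rightarrow> 'a \<Rightarrow> bool) \<Rightarrow> 'a \<Rightarrow> 'b set" where
  "Sset X Y S x = {y \<in> Y. S y x}"

definition Sinv :: "'a set \<Rightarrow> 'b set \<Rightarrow> ('b \<Rightarrow> 'a \<Rightarrow> bool) \<Rightarrow> 'b \<Rightarrow> 'a set" where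
  "Sinv X Y S y = {x \<in> X. S y x}"

definition Sprime :: "'a set \<Rightarrow> ('a \<Rightarrow> 'b \<Rightarrow> bool) \<Rightarrow> 'b set \<Rightarrow> ('b \<Rightarrow> 'a \<Rightarrow> bool) \<Rightarrow> 'a \<Rightarrow> 'a \<Rightarrow> bool" where
  "Sprime X R Y S z x \<longleftrightarrow> (\<forall>y\<in>Y. S y x \<longrightarrow> R z y)"

definition frame :: "'a set \<Rightarrow> ('a \<Rightarrow> 'b \<Rightarrow> bool) \<Rightarrow> 'b set \<Rightarrow> ('b \<Rightarrow> 'a \<Rightarrow> bool) \<Rightarrow> bool" where
  "frame X R Y S \<longleftrightarrow>
     \<comment> \<open>(F0)\<close>
     (\<forall>x\<in>X. \<exists>y\<in>Y. \<not> R x y) \<and> (\<forall>y\<in>Y. \<exists>x\<in>X. \<not> R x y) \<and>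
     \<comment> \<open>(F1)\<close>
     separated X R Y \<and>
     \<comment> \<open>(F2)\<close>
     (\<forall>x\<in>X. \<exists>y\<in>Y. Sset X Y S x = GammaY X R Y y) \<and>
     \<comment> \<open>(F3): each y S is a down-set of X\<close>
     (\<forall>y\<in>Y. \<forall>x\<in>Sinv X Y S y. \<forall>z\<in>X. leX X R Y z x \<longrightarrow> z \<in> Sinv X Y S y) \<and>
     \<comment> \<open>(F4)\<close>
     (\<forall>x\<in>X. stable X R Y {z \<in> X. Sprime X R Y S z x}) \<and>
     (\<forall>z\<in>X. stable X R Y {x \<in> X. Sprime X R Y S z x})"

definition eta :: "'a set \<Rightarrow> ('a \<Rightarrow> 'b \<Rightarrow> bool) \<Rightarrow> 'b set \<Rightarrow> ('b \<Rightarrow> 'a \<Rightarrow> bool) \<Rightarrow> 'a set \<Rightarrow> 'b set" where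
  "eta X R Y S A = lpr X R Y (rpr X R Y (\<Union>x\<in>A. Sset X Y S x))"

definition zeta :: "'a set \<Rightarrow> ('a \<Rightarrow> 'b \<Rightarrow> bool) \<Rightarrow> 'b set \<Rightarrow> ('b \<Rightarrow> 'a \<Rightarrow> bool) \<Rightarrow> 'b set \<Rightarrow> 'a set" where
  "zeta X R Y S B = {x \<in> X. eta X R Y S (GammaX X R Y x) \<subseteq> B}"

end

theory Submission
  imports Defs
begin

lemma lpr_anti: "U \<subseteq> V \<Longrightarrow> lpr X R Y V \<subseteq> lpr X R Y U"
  unfolding lpr_def by auto
lemma rpr_anti: "U \<subseteq> V \<Longrightarrow> rpr X R Y V \<subseteq> rpr X R Y U"
  unfolding rpr_def by auto
lemma lr_ext: "U \<subseteq> Y \<Longrightarrow> U \<subseteq> lpr X R Y (rpr X R Y U)"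
  unfolding lpr_def rpr_def by auto
lemma rl_ext: "U \<subseteq> X \<Longrightarrow> U \<subseteq> rpr X R Y (lpr X R Y U)"
  unfolding lpr_def rpr_def by auto

lemma eta_sub:
  assumes cB: "costable X R Y B"
  shows "eta X R Y S A \<subseteq> B \<longleftrightarrow> (\<forall>x\<in>A. Sset X Y S x \<subseteq> B)"
proof
  assume h: "eta X R Y S A \<subseteq> B"
  have "(\<Union>x\<in>A. Sset X Y S x) \<subseteq> eta X R Y S A"
    unfolding eta_def by (rule lr_ext) (auto simp: Sset_def)
  with h show "\<forall>x\<in>A. Sset X Y S x \<subseteq> B" by blast
next
  assume "\<forall>x\<in>A. Sset X Y S x \<subseteq> B"
  hence "(\<Union>x\<in>A. Sset X Y S x) \<subseteq> B" by blast
  hence "lpr X R Y (rpr X R Y (\<Union>x\<in>A. Sset X Y S x)) \<subseteq> lpr X R Y (rpr X R Y B)"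
    by (intro lpr_anti rpr_anti)
  thus "eta X R Y S A \<subseteq> B" using cB unfolding eta_def costable_def by simp
qed

lemma zeta_char:
  assumes F: "frame X R Y S" and cB: "costable X R Y B"
  shows "zeta X R Y S B = {x\<in>X. Sset X Y S x \<subseteq> B}"
proof -
  have F3: "\<And>y x z. y\<in>Y \<Longrightarrow> x \<in> X \<Longrightarrow> S y x \<Longrightarrow> z\<in>X \<Longrightarrow> leX X R Y z x \<Longrightarrow> S y z"
  proof -
    fix y x z assume a: "y\<in>Y" "x \<in> X" "S y x" "z\<in>X" "leX X R Y z x"
    have "\<forall>y\<in>Y. \<forall>x\<in>Sinv X Y S y. \<forall>z\<in>X. leX X R Y z x \<longrightarrow> z \<in> Sinv X Y S y"
      using F unfolding frame_def by (elim conjE)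
    hence "z \<in> Sinv X Y S y" using a unfolding Sinv_def by auto
    thus "S y z" unfolding Sinv_def by simp
  qed
  have "eta X R Y S (GammaX X R Y x) \<subseteq> B \<longleftrightarrow> Sset X Y S x \<subseteq> B" if x: "x \<in> X" for x
  proof -
    have "x \<in> GammaX X R Y x" using x unfolding GammaX_def leX_def by auto
    moreover have "Sset X Y S z \<subseteq> Sset X Y S x" if "z \<in> GammaX X R Y x" for z
      using that x F3 unfolding GammaX_def Sset_def by blast
    ultimately show ?thesis using eta_sub[OF cB] by blast
  qed
  thus ?thesis unfolding zeta_def by auto
qed

theorem proposition3p15:
  fixes X :: "'a set" and Y :: "'b set" and R :: "'a \<Rightarrow> 'b \<Rightarrow> bool" and S :: "'b \<Rightarrow> 'a \<Rightarrow> bool"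
  assumes "frame X R Y S"
  shows "(\<forall>B. costable X R Y B \<longrightarrow> stable X R Y (zeta X R Y S B)) \<and>
         (\<forall>A B. stable X R Y A \<longrightarrow> costable X R Y B \<longrightarrow>
            (eta X R Y S A \<subseteq> B \<longleftrightarrow> A \<subseteq> zeta X R Y S B))"
proof (intro conjI allI impI)
  fix B assume cB: "costable X R Y B"
  define Bp where "Bp = rpr X R Y B"
  define T where "T u = {x \<in> X. Sprime X R Y S u x}" for u
  have F4: "\<And>u. u \<in> X \<Longrightarrow> stable X R Y (T u)"
  proof -
    fix u assume "u \<in> X"
    moreover have "\<forall>z\<in>X. stable X R Y {x \<in> X. Sprime X R Y S z x}"
      using assms unfolding frame_def by (elim conjE)
    ultimately show "stable X R Y (T u)" unfolding T_def by blast
  qed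
  have Bp: "Bp \<subseteq> X" unfolding Bp_def rpr_def by auto
  have eq: "zeta X R Y S B = {x\<in>X. \<forall>u\<in>Bp. x \<in> T u}"
  proof -
    have BB: "B = lpr X R Y Bp" using cB unfolding costable_def Bp_def by simp
    have "Sset X Y S x \<subseteq> B \<longleftrightarrow> (\<forall>u\<in>Bp. x \<in> T u)" if "x \<in> X" for x
    proof -
      have "Sset X Y S x \<subseteq> B \<longleftrightarrow> Sset X Y S x \<subseteq> lpr X R Y Bp" using BB by simp
      also have "\<dots> \<longleftrightarrow> (\<forall>u\<in>Bp. x \<in> T u)"
        using that unfolding Sset_def lpr_def T_def Sprime_def by blast
      finally show ?thesis .
    qed
    thus ?thesis using zeta_char[OF assms cB] by auto
  qed
  let ?Z = "{x\<in>X. \<forall>u\<in>Bp. x \<in> T u}"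
  have "rpr X R Y (lpr X R Y ?Z) \<subseteq> ?Z"
  proof
    fix x assume x: "x \<in> rpr X R Y (lpr X R Y ?Z)"
    have "x \<in> X" using x unfolding rpr_def by auto
    moreover have "x \<in> T u" if u: "u \<in> Bp" for u
    proof -
      have "?Z \<subseteq> T u" using u by blast
      hence "rpr X R Y (lpr X R Y ?Z) \<subseteq> rpr X R Y (lpr X R Y (T u))"
        by (intro rpr_anti lpr_anti)
      moreover have "rpr X R Y (lpr X R Y (T u)) = T u" using F4[of u] u Bp unfolding stable_def by auto
      ultimately show ?thesis using x by auto
    qed
    ultimately show "x \<in> ?Z" by blast
  qed
  moreover have "?Z \<subseteq> rpr X R Y (lpr X R Y ?Z)" by (rule rl_ext) auto
  ultimately show "stable X R Y (zeta X R Y S B)" unfolding eq stable_def by auto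
next
  fix A B assume sA: "stable X R Y A" and cB: "costable X R Y B"
  have AX: "A \<subseteq> X" using sA unfolding stable_def by auto
  show "eta X R Y S A \<subseteq> B \<longleftrightarrow> A \<subseteq> zeta X R Y S B"
    unfolding eta_sub[OF cB] zeta_char[OF assms cB] using AX by auto
qed

end
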